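(* Let $\alpha>1$, $\mathcal{D}_\alpha\in\{\mathcal{F}_\alpha,\mathcal{P}_\alpha\}$, $\mathcal{B}\subseteq[d]$, $i\in\mathcal{B}$, $j\in\mathcal{B}\setminus\{i\}$, $\lambda\in[0,\infty)^d$, and an integer $\tilde m\ge2$. If $\tilde m<|\mathcal{B}|$, then $$\frac{J_i(\lambda;\mathcal{D}_\alpha,\tilde m,\mathcal{B})}{\phi_i(\lambda;\mathcal{D}_\alpha,\tilde m,\mathcal{B})}\le\frac{J_i(\lambda;\mathcal{D}_\alpha,\tilde m-1,\mathcal{B}\setminus\{j\})}{\phi_i(\lambda;\mathcal{D}_\alpha,\tilde m-1,\mathcal{B}\setminus\{j\})}\vee\frac{J_i(\lambda;\mathcal{D}_\alpha,\tilde m,\mathcal{B}\setminus\{j\})}{\phi_i(\lambda;\mathcal{D}_\alpha,\tilde m,\mathcal{B}\setminus\{j\})}.$$ If $\tilde m=|\mathcal{B}|$, then $$\frac{J_i(\lambda;\mathcal{D}_\alpha,\tilde m,\mathcal{B})}{\phi_i(\lambda;\mathcal{D}_\alpha,\tilde m,\mathcal{B})}\le\frac{J_i(\lambda;\mathcal{D}_\alpha,\tilde m-1,\mathcal{B}\setminus\{j\})}{\phi_i(\lambda;\mathcal{D}_\alpha,\tilde m-1,\mathcal{B}\setminus\{j\})}.$$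
   Context: $u\vee v=\max(u,v)$. Fréchet $\mathcal{F}_\alpha$: CDF $F(x)=e^{-1/x^\alpha}$, density $f(x)=\alpha x^{-(\alpha+1)}e^{-1/x^\alpha}$, $x\ge0$, left endpoint $\nu=0$; Pareto $\mathcal{P}_\alpha$: $F(x)=1-x^{-\alpha}$, $f(x)=\alpha x^{-(\alpha+1)}$, $x\ge1$, $\nu=1$. For $\mathcal{B}\subseteq[d]$, $i\in\mathcal{B}$, $u\in\mathbb{R}^d$, $\mathrm{rank}(i,u;\mathcal{B})$ is the rank of $u_i$ among $\{u_k:k\in\mathcal{B}\}$ in descending order. For $\mathcal{D}\in\{\mathcal{F}_\alpha,\mathcal{P}_\alpha\}$ with CDF $F$, density $f$, left endpoint $\nu$, $\lambda\in[0,\infty)^d$, integer $\theta\ge1$: $$\phi_{i,\theta}(\lambda;\mathcal{D},\mathcal{B})=\int_{\nu-\lambda_i}^\infty\sum_{S\subseteq\mathcal{B}\setminus\{i\},|S|=\theta-1}\prod_{k\in S}(1-F(z+\lambda_k))\prod_{k\in\mathcal{B}\setminus(S\cup\{i\})}F(z+\lambda_k)\,f(z+\lambda_i)\,dz$$ (equal to $\mathbb{P}[\mathrm{rank}(i,r-\lambda;\mathcal{B})=\theta]$ for $r$ with i.i.d. coordinates from $\mathcal{D}$; empty sum $=0$), and $J_{i,\theta}(\lambda;\mathcal{D},\mathcal{B})$ is the same integral with the extra factor $\frac1{z+\lambda_i}$ in the integrand. $\phi_i(\lambda;\mathcal{D},\tilde m,\mathcal{B})=\sum_{\theta=1}^{\tilde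 m}\phi_{i,\theta}(\lambda;\mathcal{D},\mathcal{B})$ and $J_i(\lambda;\mathcal{D},\tilde m,\mathcal{B})=\sum_{\theta=1}^{\tilde m}J_{i,\theta}(\lambda;\mathcal{D},\mathcal{B})$. *)

theory Defs
  imports "HOL-Analysis.Analysis"
begin

datatype distr = Frechet | Pareto

definition cdf_D :: "distr \<Rightarrow> real \<Rightarrow> real \<Rightarrow> real" where
  "cdf_D D a x = (case D of
      Frechet \<Rightarrow> (if x \<le> 0 then 0 else exp (- (1 / x powr a)))
    | Pareto \<Rightarrow> (if x < 1 then 0 else 1 - x powr (- a)))"

definition pdf_D :: "distr \<Rightarrow> real \<Rightarrow> real \<Rightarrow> real" where
  "pdf_D D a x = (case D of
      Frechet \<Rightarrow> (if x \<le> 0 then 0 else a * x powr (-(a + 1)) * exp (- (1 / x powr a)))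
    | Pareto \<Rightarrow> (if x < 1 then 0 else a * x powr (-(a + 1))))"

definition nu_D :: "distr \<Rightarrow> real" where
  "nu_D D = (case D of Frechet \<Rightarrow> 0 | Pareto \<Rightarrow> 1)"

definition rank_kernel ::
  "distr \<Rightarrow> real \<Rightarrow> (nat \<Rightarrow> real) \<Rightarrow> nat set \<Rightarrow> nat \<Rightarrow> nat \<Rightarrow> real \<Rightarrow> real" where
  "rank_kernel D a lam B i th z =
     (\<Sum>S\<in>{S. S \<subseteq> B - {i} \<and> card S = th - 1}.
        (\<Prod>k\<in>S. 1 - cdf_D D a (z + lam k)) *
        (\<Prod>k\<in>B - (S \<union> {i}). cdf_D D a (z + lam k)))"

definition phi_it ::
  "distr \<Rightarrow> real \<Rightarrow> (nat \<Rightarrow> real) \<Rightarrow> nat set \<Rightarrow> nat \<Rightarrow> nat \<Rightarrow> real" where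
  "phi_it D a lam B i th =
     (LINT z:{nu_D D - lam i..}|lborel.
        rank_kernel D a lam B i th z * pdf_D D a (z + lam i))"

definition J_it ::
  "distr \<Rightarrow> real \<Rightarrow> (nat \<Rightarrow> real) \<Rightarrow> nat set \<Rightarrow> nat \<Rightarrow> nat \<Rightarrow> real" where
  "J_it D a lam B i th =
     (LINT z:{nu_D D - lam i..}|lborel.
        rank_kernel D a lam B i th z * pdf_D D a (z + lam i) / (z + lam i))"

definition phi_i ::
  "distr \<Rightarrow> real \<Rightarrow> (nat \<Rightarrow> real) \<Rightarrow> nat \<Rightarrow> nat set \<Rightarrow> nat \<Rightarrow> real" where
  "phi_i D a lam m B i = (\<Sum>th=1..m. phi_it D a lam B i th)"

definition J_i ::
  "distr \<Rightarrow> real \<Rightarrow> (nat \<Rightarrow> real) \<Rightarrow> nat \<Rightarrow> nat set \<Rightarrow> nat \<Rightarrow> real" where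
  "J_i D a lam m B i = (\<Sum>th=1..m. J_it D a lam B i th)"

end

theory Submission
  imports Defs
begin

lemma cdf_bounds:
  assumes "a > 1"
  shows "0 \<le> cdf_D D a x" "cdf_D D a x \<le> 1"
proof -
  have *: "x powr (-a) \<le> 1" if "x \<ge> 1" using ge_one_powr_ge_zero[of x a] that assms
    by (auto simp: powr_minus field_simps)
  show "0 \<le> cdf_D D a x" "cdf_D D a x \<le> 1" using * by (cases D; auto simp: cdf_D_def)+
qed

lemma cdf_mono:
  assumes "a > 1" "x \<le> y"
  shows "cdf_D D a x \<le> cdf_D D a y"
proof (cases D)
  case Frechet
  show ?thesis
  proof (cases "x \<le> 0")
    case True then show ?thesis using Frechet by (auto simp: cdf_D_def)
  next
    case False
    then have "x powr a \<le> y powr a" using assms by (intro powr_mono2) auto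
    then have "1 / y powr a \<le> 1 / x powr a" using False assms
      by (intro divide_left_mono) auto
    then show ?thesis using Frechet False assms by (auto simp: cdf_D_def)
  qed
next
  case Pareto
  show ?thesis
  proof (cases "x < 1")
    case True then show ?thesis using Pareto assms cdf_bounds[of a D y]
      by (auto simp: cdf_D_def)
  next
    case False
    then have "y powr (-a) \<le> x powr (-a)" using assms
      by (intro powr_mono2') auto
    then show ?thesis using Pareto False assms by (auto simp: cdf_D_def)
  qed
qed

lemma pdf_nonneg: assumes "a > 1" shows "0 \<le> pdf_D D a x"
  using assms by (cases D) (auto simp: pdf_D_def)

lemma pdf_pos_support: assumes "pdf_D D a x \<noteq> 0" shows "x > 0" "x \<ge> nu_D D"
  using assms by (cases D; auto simp: pdf_D_def nu_D_def split: if_splits)+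

lemma exp_cube_bound: fixes t :: real assumes "t \<ge> 0" shows "exp (-t) * t^3 \<le> 27"
proof -
  have "t/3 \<le> exp (t/3)" using exp_ge_add_one_self[of "t/3"] by linarith
  then have "(t/3)^3 \<le> exp (t/3) ^ 3" using assms by (intro power_mono) auto
  also have "exp (t/3) ^ 3 = exp t" by (simp add: exp_of_nat_mult[symmetric])
  finally have "t^3 \<le> 27 * exp t" by (simp add: power_divide)
  then have "exp (-t) * t^3 \<le> exp (-t) * (27 * exp t)" by (intro mult_left_mono) auto
  also have "\<dots> = 27" by (simp add: exp_minus field_simps)
  finally show ?thesis .
qed

lemma frechet_small:
  fixes a x :: real
  assumes "a > 1" "0 < x" "x \<le> 1"
  shows "a * x powr (-(a+1)) * exp (- (1 / x powr a)) \<le> 27 * a * x"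
proof -
  define t where "t = 1 / x powr a"
  have "x powr a > 0" using assms by simp
  then have tpos: "t > 0" by (simp add: t_def)
  have e: "exp (-t) \<le> 27 / t^3" using exp_cube_bound[of t] tpos by (simp add: field_simps)
  have t3: "1 / t^3 = x powr (3*a)"
    using assms by (simp add: t_def power_divide powr_realpow[symmetric] powr_powr mult.commute)
  have "a * x powr (-(a+1)) * exp (-t) \<le> a * x powr (-(a+1)) * (27 / t^3)"
    using e assms by (intro mult_left_mono) auto
  also have "\<dots> = 27 * a * (x powr (-(a+1)) * (1 / t^3))" by simp
  also have "\<dots> = 27 * a * (x powr (-(a+1)) * x powr (3*a))" using t3 by simp
  also have "x powr (-(a+1)) * x powr (3*a) = x powr (2*a - 1)"
    by (simp add: powr_add[symmetric])
  also have "x powr (2*a - 1) \<le> x powr 1" using assms by (intro powr_mono') auto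
  finally show ?thesis using assms by (simp add: t_def mult_left_mono)
qed

definition gb :: "real \<Rightarrow> real" where
  "gb x = (if x \<le> 0 then 0 else if x \<le> 1 then 1 else 1 / x^2)"

lemma large_pow:
  fixes a x :: real
  assumes "a > 1" "x > 1"
  shows "a * x powr (-(a+1)) \<le> a * (1 / x^2)"
proof -
  have "x powr (-(a+1)) \<le> x powr (-2::real)" using assms by (intro powr_mono) auto
  also have "x powr (-2::real) = 1 / x^2" using assms by (simp add: powr_minus field_simps)
  finally show ?thesis using assms by (intro mult_left_mono) auto
qed

lemma pdf_bound:
  assumes "a > 1"
  shows "pdf_D D a x \<le> 27 * a * gb x" "pdf_D D a x / x \<le> 27 * a * gb x"
proof -
  have A: "pdf_D D a x \<le> 27 * a * gb x \<and> pdf_D D a x / x \<le> 27 * a * gb x"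
  proof (cases "x \<le> 0")
    case True
    then have "pdf_D D a x = 0" using pdf_pos_support(1)[of D a x] by fastforce
    then show ?thesis using True assms by (simp add: gb_def)
  next
    case xpos: False
    show ?thesis
    proof (cases "x \<le> 1")
      case True
      have "pdf_D D a x \<le> 27 * a * x"
      proof (cases D)
        case Frechet then show ?thesis using frechet_small[OF assms _ True] xpos
          by (simp add: pdf_D_def)
      next
        case Pareto
        show ?thesis
        proof (cases "x < 1")
          case True then show ?thesis using Pareto xpos assms by (simp add: pdf_D_def)
        next
          case False then have "x = 1" using \<open>x \<le> 1\<close> by simp
          then show ?thesis using Pareto assms by (simp add: pdf_D_def)
        qed
      qed
      moreover have "pdf_D D a x / x \<le> 27 * a" using calculation xpos
        by (simp add: divide_le_eq mult.commute)
      moreover have "27 * a * x \<le> 27 * a" using True assms by simp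
      ultimately show ?thesis using True xpos by (simp add: gb_def)
    next
      case False
      have e: "exp (- (1 / x powr a)) \<le> 1" by simp
      have "pdf_D D a x \<le> a * x powr (-(a+1))"
      proof (cases D)
        case Frechet
        have "a * x powr (-(a+1)) * exp (- (1 / x powr a)) \<le> a * x powr (-(a+1)) * 1"
          using assms by (intro mult_left_mono e) auto
        then show ?thesis using Frechet xpos by (simp add: pdf_D_def)
      qed (use False in \<open>simp add: pdf_D_def\<close>)
      also have "\<dots> \<le> a * (1 / x^2)" using large_pow[OF assms] False by simp
      finally have p: "pdf_D D a x \<le> a * (1 / x^2)" .
      have "1 * pdf_D D a x \<le> x * pdf_D D a x" using False pdf_nonneg[OF assms, of D x]
        by (intro mult_right_mono) auto
      then have "pdf_D D a x / x \<le> pdf_D D a x" using False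
        by (simp add: divide_le_eq mult.commute)
      moreover have "a * (1 / x^2) \<le> 27 * a * (1/x^2)" using assms by (intro mult_right_mono) auto
      ultimately show ?thesis using p False assms by (simp add: gb_def)
    qed
  qed
  then show "pdf_D D a x \<le> 27 * a * gb x" "pdf_D D a x / x \<le> 27 * a * gb x" by auto
qed

lemma gb_meas[measurable]: "gb \<in> borel_measurable borel"
  unfolding gb_def by measurable

lemma tail_integrable: "integrable lborel (\<lambda>x::real. indicator {1..} x * (1 / x^2))"
proof -
  have "(\<lambda>x::real. 1 / x ^ 2) integrable_on {1..}"
    using has_integral_inverse_power_to_inf[of 2 1] unfolding integrable_on_def by auto
  then have "(\<lambda>x::real. 1 / x ^ 2) absolutely_integrable_on {1..}"
    by (rule nonnegative_absolutely_integrable_1) auto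
  then have "integrable lebesgue (\<lambda>x::real. indicator {1..} x *\<^sub>R (1 / x^2))"
    by (simp add: set_integrable_def)
  then have "integrable lborel (\<lambda>x::real. indicator {1..} x *\<^sub>R (1 / x^2))"
    by (subst (asm) integrable_completion) auto
  then show ?thesis by simp
qed

lemma gb_integrable: "integrable lborel gb"
proof (rule Bochner_Integration.integrable_bound)
  show "integrable lborel (\<lambda>x::real. indicator {0..1} x + indicator {1..} x * (1 / x^2))"
    using tail_integrable borel_integrable_atLeastAtMost[of 0 1 "\<lambda>_. 1"]
    by (intro Bochner_Integration.integrable_add) auto
  show "AE x in lborel. norm (gb x) \<le> norm (indicator {0..1} x + indicator {1..} x * (1 / (x::real)^2))"
    by (auto simp: gb_def indicator_def)
qed simp

lemma gb_shift_integrable: "integrable lborel (\<lambda>z. gb (z + c))"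
  using lborel_integrable_real_affine[OF gb_integrable, of 1 c] by (simp add: add.commute)

lemma cdf_meas[measurable]: "cdf_D D a \<in> borel_measurable borel"
proof (cases D)
  case Frechet
  have "cdf_D D a = (\<lambda>x. if x \<le> 0 then 0 else exp (- (1 / x powr a)))"
    using Frechet by (auto simp: cdf_D_def)
  then show ?thesis by simp
next
  case Pareto
  have "cdf_D D a = (\<lambda>x. if x < 1 then 0 else 1 - x powr (- a))"
    using Pareto by (auto simp: cdf_D_def)
  then show ?thesis by simp
qed

lemma pdf_meas[measurable]: "pdf_D D a \<in> borel_measurable borel"
proof (cases D)
  case Frechet
  have "pdf_D D a = (\<lambda>x. if x \<le> 0 then 0 else a * x powr (-(a + 1)) * exp (- (1 / x powr a)))"
    using Frechet by (auto simp: pdf_D_def)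
  then show ?thesis by simp
next
  case Pareto
  have "pdf_D D a = (\<lambda>x. if x < 1 then 0 else a * x powr (-(a + 1)))"
    using Pareto by (auto simp: pdf_D_def)
  then show ?thesis by simp
qed

lemma gb_nonneg: "gb x \<ge> 0" by (simp add: gb_def)

lemma kernel_meas[measurable]: "rank_kernel D a lam B i th \<in> borel_measurable borel"
  unfolding rank_kernel_def[abs_def] by measurable

lemma kernel_bounds:
  assumes "a > 1"
  shows "0 \<le> rank_kernel D a lam B i th z"
    "rank_kernel D a lam B i th z \<le> real (card {S. S \<subseteq> B - {i} \<and> card S = th - 1})"
proof -
  have t: "0 \<le> (\<Prod>k\<in>S. 1 - cdf_D D a (z + lam k)) * (\<Prod>k\<in>B - (S \<union> {i}). cdf_D D a (z + lam k))
     \<and> (\<Prod>k\<in>S. 1 - cdf_D D a (z + lam k)) * (\<Prod>k\<in>B - (S \<union> {i}). cdf_D D a (z + lam k)) \<le> 1" for S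
    using cdf_bounds[OF assms]
    by (intro conjI mult_nonneg_nonneg mult_le_one prod_nonneg prod_le_1) auto
  show "0 \<le> rank_kernel D a lam B i th z" unfolding rank_kernel_def
    using t by (intro sum_nonneg) auto
  have "rank_kernel D a lam B i th z \<le> (\<Sum>S\<in>{S. S \<subseteq> B - {i} \<and> card S = th - 1}. 1)"
    unfolding rank_kernel_def using t by (intro sum_mono) auto
  then show "rank_kernel D a lam B i th z \<le> real (card {S. S \<subseteq> B - {i} \<and> card S = th - 1})"
    by simp
qed

lemma integrable_X:
  assumes "a > 1" "X \<in> borel_measurable borel" "\<And>z. \<bar>X z\<bar> \<le> C"
  shows "integrable lborel (\<lambda>z. X z * pdf_D D a (z + c))"
    "integrable lborel (\<lambda>z. X z * pdf_D D a (z + c) / (z + c))"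
proof -
  have C: "0 \<le> C" using assms(3)[of 0] by linarith
  have gi: "integrable lborel (\<lambda>z. C * (27 * a * gb (z + c)))"
    using gb_shift_integrable[of c] by (intro integrable_mult_right) 
  show "integrable lborel (\<lambda>z. X z * pdf_D D a (z + c))"
  proof (rule Bochner_Integration.integrable_bound[OF gi])
    show "AE z in lborel. norm (X z * pdf_D D a (z + c)) \<le> norm (C * (27 * a * gb (z + c)))"
    proof (intro AE_I2)
      fix z
      have "\<bar>X z\<bar> * pdf_D D a (z + c) \<le> C * (27 * a * gb (z + c))"
        using assms(3)[of z] pdf_bound(1)[OF assms(1), of D "z+c"] pdf_nonneg[OF assms(1)] C
        by (intro mult_mono) auto
      then show "norm (X z * pdf_D D a (z + c)) \<le> norm (C * (27 * a * gb (z + c)))"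
        using pdf_nonneg[OF assms(1)] C assms(1) gb_nonneg by (simp add: abs_mult)
    qed
  qed (use assms in measurable)
  show "integrable lborel (\<lambda>z. X z * pdf_D D a (z + c) / (z + c))"
  proof (rule Bochner_Integration.integrable_bound[OF gi])
    show "AE z in lborel. norm (X z * pdf_D D a (z + c) / (z + c)) \<le> norm (C * (27 * a * gb (z + c)))"
    proof (intro AE_I2)
      fix z
      have nn: "0 \<le> pdf_D D a (z + c) / (z + c)"
        using pdf_pos_support(1)[of D a "z+c"] pdf_nonneg[OF assms(1), of D "z+c"]
        by (cases "pdf_D D a (z + c) = 0") auto
      have "\<bar>X z\<bar> * (pdf_D D a (z + c) / (z + c)) \<le> C * (27 * a * gb (z + c))"
        using assms(3)[of z] pdf_bound(2)[OF assms(1), of D "z+c"] nn C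
        by (intro mult_mono) auto
      then show "norm (X z * pdf_D D a (z + c) / (z + c)) \<le> norm (C * (27 * a * gb (z + c)))"
      proof -
        have "norm (X z * pdf_D D a (z + c) / (z + c)) = \<bar>X z\<bar> * (pdf_D D a (z + c) / (z + c))"
          by (simp only: real_norm_def times_divide_eq_right[symmetric] abs_mult abs_of_nonneg[OF nn])
        then show ?thesis using \<open>\<bar>X z\<bar> * (pdf_D D a (z + c) / (z + c)) \<le> C * (27 * a * gb (z + c))\<close>
          C assms(1) gb_nonneg[of "z+c"] by simp
      qed
    qed
  qed (use assms in measurable)
qed

lemma set_to_full:
  assumes "\<And>z. f z \<noteq> 0 \<Longrightarrow> pdf_D D a (z + c) \<noteq> 0"
  shows "(LINT z:{nu_D D - c..}|lborel. f z) = (\<integral>z. f z \<partial>lborel)"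
  unfolding set_lebesgue_integral_def
proof (rule Bochner_Integration.integral_cong)
  fix z
  show "indicator {nu_D D - c..} z *\<^sub>R f z = f z"
    using assms[of z] pdf_pos_support(2)[of D a "z+c"]
    by (cases "f z = 0") (auto simp: indicator_def)
qed simp

lemma phi_it_full: "phi_it D a lam B i th = (\<integral>z. rank_kernel D a lam B i th z * pdf_D D a (z + lam i) \<partial>lborel)"
  unfolding phi_it_def by (rule set_to_full) auto

lemma J_it_full: "J_it D a lam B i th = (\<integral>z. rank_kernel D a lam B i th z * pdf_D D a (z + lam i) / (z + lam i) \<partial>lborel)"
  unfolding J_it_def by (rule set_to_full) auto

lemma subsets_insert_sum:
  fixes P :: "nat set \<Rightarrow> real"
  assumes A: "finite A" and j: "j \<notin> A"
  shows "(\<Sum>S\<in>{S. S \<subseteq> insert j A \<and> card S = n}. P S)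
       = (\<Sum>S\<in>{S. S \<subseteq> A \<and> card S = n}. P S)
         + (if n = 0 then 0 else (\<Sum>T\<in>{T. T \<subseteq> A \<and> card T = n - 1}. P (insert j T)))"
proof -
  let ?U1 = "{S. S \<subseteq> A \<and> card S = n}"
  let ?U2 = "{S. S \<subseteq> insert j A \<and> j \<in> S \<and> card S = n}"
  have fin: "finite {S. S \<subseteq> insert j A}" using A by simp
  have eq: "{S. S \<subseteq> insert j A \<and> card S = n} = ?U1 \<union> ?U2"
    by (auto simp: subset_insert j)
  have f1: "finite ?U1" by (rule finite_subset[OF _ fin]) auto
  have f2: "finite ?U2" by (rule finite_subset[OF _ fin]) auto
  have d: "?U1 \<inter> ?U2 = {}" using j by auto
  have s: "(\<Sum>S\<in>{S. S \<subseteq> insert j A \<and> card S = n}. P S) = (\<Sum>S\<in>?U1. P S) + (\<Sum>S\<in>?U2. P S)"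
    unfolding eq by (rule sum.union_disjoint[OF f1 f2 d])
  show ?thesis
  proof (cases "n = 0")
    case True
    have e: "?U2 = {}"
    proof (rule ccontr)
      assume "?U2 \<noteq> {}"
      then obtain S where S: "S \<subseteq> insert j A" "j \<in> S" "card S = n" by auto
      have "finite S" using S(1) A finite_subset by blast
      then show False using S True by auto
    qed
    have "sum P ?U2 = 0" by (simp only: e sum.empty)
    then show ?thesis using s True by simp
  next
    case False
    have img: "?U2 = insert j ` {T. T \<subseteq> A \<and> card T = n - 1}"
    proof (intro equalityI subsetI)
      fix S assume "S \<in> ?U2"
      then have S: "S \<subseteq> insert j A" "j \<in> S" "card S = n" by auto
      have "finite S" using S(1) A finite_subset by blast
      have "S - {j} \<subseteq> A" "card (S - {j}) = n - 1" using S \<open>finite S\<close> by auto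
      moreover have "S = insert j (S - {j})" using S by auto
      ultimately show "S \<in> insert j ` {T. T \<subseteq> A \<and> card T = n - 1}" by blast
    next
      fix S assume "S \<in> insert j ` {T. T \<subseteq> A \<and> card T = n - 1}"
      then obtain T where T: "T \<subseteq> A" "card T = n - 1" "S = insert j T" by auto
      have "finite T" using T(1) A finite_subset by blast
      have "j \<notin> T" using T j by auto
      then show "S \<in> ?U2" using T \<open>finite T\<close> False by auto
    qed
    have inj: "inj_on (insert j) {T. T \<subseteq> A \<and> card T = n - 1}"
      using j by (auto simp: inj_on_def)
    have "(\<Sum>S\<in>?U2. P S) = (\<Sum>T\<in>{T. T \<subseteq> A \<and> card T = n - 1}. P (insert j T))"
      unfolding img by (rule sum.reindex[OF inj, unfolded comp_def])
    then show ?thesis using s False by simp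
  qed
qed

lemma kernel_decomp:
  assumes fin: "finite B" and ij: "i \<in> B" "j \<in> B" "j \<noteq> i"
  shows "rank_kernel D a lam B i th z
     = cdf_D D a (z + lam j) * rank_kernel D a lam (B - {j}) i th z
       + (if th - 1 = 0 then 0 else (1 - cdf_D D a (z + lam j)) * rank_kernel D a lam (B - {j}) i (th - 1) z)"
proof -
  define G where "G k = 1 - cdf_D D a (z + lam k)" for k
  define F where "F k = cdf_D D a (z + lam k)" for k
  define A where "A = B - {j} - {i}"
  have finA: "finite A" using fin by (simp add: A_def)
  have jA: "j \<notin> A" by (simp add: A_def)
  have BA: "B - {i} = insert j A" using ij by (auto simp: A_def)
  have BA': "B - {j} - {i} = A" by (simp add: A_def)
  define P where "P S = (\<Prod>k\<in>S. G k) * (\<Prod>k\<in>B - (S \<union> {i}). F k)" for S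
  have K: "rank_kernel D a lam B i th z = (\<Sum>S\<in>{S. S \<subseteq> insert j A \<and> card S = th - 1}. P S)"
    unfolding rank_kernel_def P_def F_def G_def BA by simp
  have K': "rank_kernel D a lam (B - {j}) i n z
     = (\<Sum>S\<in>{S. S \<subseteq> A \<and> card S = n - 1}. (\<Prod>k\<in>S. G k) * (\<Prod>k\<in>B - {j} - (S \<union> {i}). F k))" for n
    unfolding rank_kernel_def F_def G_def BA' by simp
  have P1: "P S = F j * ((\<Prod>k\<in>S. G k) * (\<Prod>k\<in>B - {j} - (S \<union> {i}). F k))" if "S \<subseteq> A" for S
  proof -
    have "B - (S \<union> {i}) = insert j (B - {j} - (S \<union> {i}))" using that ij jA by auto
    then have "(\<Prod>k\<in>B - (S \<union> {i}). F k) = F j * (\<Prod>k\<in>B - {j} - (S \<union> {i}). F k)"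
      using fin by simp
    then show ?thesis unfolding P_def by simp
  qed
  have P2: "P (insert j T) = G j * ((\<Prod>k\<in>T. G k) * (\<Prod>k\<in>B - {j} - (T \<union> {i}). F k))" if "T \<subseteq> A" for T
  proof -
    have fT: "finite T" using that finA finite_subset by blast
    have "j \<notin> T" using that jA by auto
    then have "(\<Prod>k\<in>insert j T. G k) = G j * (\<Prod>k\<in>T. G k)" using fT by simp
    moreover have "B - (insert j T \<union> {i}) = B - {j} - (T \<union> {i})" by auto
    ultimately show ?thesis unfolding P_def by simp
  qed
  have "rank_kernel D a lam B i th z = (\<Sum>S\<in>{S. S \<subseteq> A \<and> card S = th - 1}. P S)
         + (if th - 1 = 0 then 0 else (\<Sum>T\<in>{T. T \<subseteq> A \<and> card T = th - 1 - 1}. P (insert j T)))"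
    unfolding K by (rule subsets_insert_sum[OF finA jA])
  also have "(\<Sum>S\<in>{S. S \<subseteq> A \<and> card S = th - 1}. P S) = F j * rank_kernel D a lam (B - {j}) i th z"
    unfolding K' sum_distrib_left by (rule sum.cong) (auto simp: P1)
  also have "(\<Sum>T\<in>{T. T \<subseteq> A \<and> card T = th - 1 - 1}. P (insert j T)) = G j * rank_kernel D a lam (B - {j}) i (th - 1) z"
    unfolding K' sum_distrib_left by (rule sum.cong) (auto simp: P2)
  finally show ?thesis by (simp add: F_def G_def)
qed

lemma kernel_sum:
  assumes fin: "finite B" and ij: "i \<in> B" "j \<in> B" "j \<noteq> i" and m: "m \<ge> 1"
  shows "(\<Sum>th=1..m. rank_kernel D a lam B i th z)
     = (\<Sum>th=1..m-1. rank_kernel D a lam (B - {j}) i th z) + cdf_D D a (z + lam j) * rank_kernel D a lam (B - {j}) i m z"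
  using m
proof (induction m)
  case 0 then show ?case by simp
next
  case (Suc m)
  show ?case
  proof (cases "m = 0")
    case True then show ?thesis using kernel_decomp[OF assms(1-4), of D a lam 1 z] by simp
  next
    case False
    then have IH: "(\<Sum>th=1..m. rank_kernel D a lam B i th z)
     = (\<Sum>th=1..m-1. rank_kernel D a lam (B - {j}) i th z) + cdf_D D a (z + lam j) * rank_kernel D a lam (B - {j}) i m z"
      using Suc by simp
    have d: "rank_kernel D a lam B i (Suc m) z = cdf_D D a (z + lam j) * rank_kernel D a lam (B - {j}) i (Suc m) z
       + (1 - cdf_D D a (z + lam j)) * rank_kernel D a lam (B - {j}) i m z"
      using kernel_decomp[OF assms(1-4), of D a lam "Suc m" z] False by simp
    have s1: "(\<Sum>th=1..Suc m. rank_kernel D a lam B i th z) = (\<Sum>th=1..m. rank_kernel D a lam B i th z) + rank_kernel D a lam B i (Suc m) z"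
      by simp
    have s2: "(\<Sum>th=1..m. rank_kernel D a lam (B - {j}) i th z) = (\<Sum>th=1..m-1. rank_kernel D a lam (B - {j}) i th z) + rank_kernel D a lam (B - {j}) i m z"
      using False by (cases m) auto
    show ?thesis unfolding s1 IH d using s2 by (simp add: algebra_simps)
  qed
qed

lemma cheb:
  fixes w h :: "real \<Rightarrow> real" and c :: real
  assumes iw: "integrable lborel w" and iq: "integrable lborel (\<lambda>z. w z / (z + c))"
    and ih: "integrable lborel (\<lambda>z. h z * w z)" and ihq: "integrable lborel (\<lambda>z. h z * w z / (z + c))"
    and w0: "\<And>z. w z \<ge> 0" and h0: "\<And>z. h z \<ge> 0" and h1: "\<And>z. h z \<le> 1"
    and hm: "\<And>x y. x \<le> y \<Longrightarrow> h x \<le> h y"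
    and sup: "\<And>z. w z \<noteq> 0 \<Longrightarrow> z + c > 0"
  shows "(\<integral>z. h z * w z / (z + c) \<partial>lborel) * (\<integral>z. w z \<partial>lborel)
         \<le> (\<integral>z. w z / (z + c) \<partial>lborel) * (\<integral>z. h z * w z \<partial>lborel)"
proof -
  define Iw where "Iw = (\<integral>z. w z \<partial>lborel)"
  define Iq where "Iq = (\<integral>z. w z / (z + c) \<partial>lborel)"
  define Ih where "Ih = (\<integral>z. h z * w z \<partial>lborel)"
  define Ihq where "Ihq = (\<integral>z. h z * w z / (z + c) \<partial>lborel)"
  have q0: "w z / (z + c) \<ge> 0" for z
    using sup[of z] w0[of z] by (cases "w z = 0") auto
  have hq0: "h z * w z / (z + c) \<ge> 0" for z
    using q0[of z] h0[of z] by (simp add: mult_nonneg_nonneg times_divide_eq_right[symmetric] del: times_divide_eq_right)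
  have hqle: "h z * w z / (z + c) \<le> w z / (z + c)" for z
  proof -
    have "h z * (w z / (z + c)) \<le> 1 * (w z / (z + c))"
      using q0[of z] h1[of z] by (intro mult_right_mono) auto
    then show ?thesis by simp
  qed
  have Iw0: "Iw \<ge> 0" unfolding Iw_def using w0 by (intro integral_nonneg_AE) auto
  have Iq0: "Iq \<ge> 0" unfolding Iq_def using q0 by (intro integral_nonneg_AE) auto
  have Ih0: "Ih \<ge> 0" unfolding Ih_def using h0 w0 by (intro integral_nonneg_AE) auto
  have Ihq0: "Ihq \<ge> 0" unfolding Ihq_def using hq0 by (intro integral_nonneg_AE) auto
  have Ihqle: "Ihq \<le> Iq" unfolding Ihq_def Iq_def using hqle by (intro integral_mono[OF ihq iq]) auto
  show ?thesis
  proof (cases "Iw = 0 \<or> Iq = 0")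
    case True
    then show ?thesis
    proof
      assume "Iw = 0" then show ?thesis using Iq0 Ih0 unfolding Iw_def Iq_def Ih_def by simp
    next
      assume "Iq = 0" then have "Ihq = 0" using Ihqle Ihq0 by simp
      then show ?thesis using Iq0 Ih0 Iw0 unfolding Iw_def Iq_def Ih_def Ihq_def by simp
    qed
  next
    case False
    then have Iwp: "Iw > 0" and Iqp: "Iq > 0" using Iw0 Iq0 by auto
    define mu where "mu = Iq / Iw"
    have mup: "mu > 0" using Iwp Iqp by (simp add: mu_def)
    define t where "t = 1 / mu - c"
    define ct where "ct = h t"
    have pw: "(h z - ct) * (w z / (z + c) - mu * w z) \<le> 0" for z
    proof (cases "w z = 0")
      case True then show ?thesis by simp
    next
      case False
      then have zc: "z + c > 0" using sup by blast
      have wp: "w z > 0" using w0[of z] False by simp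
      have e: "w z / (z + c) - mu * w z = w z * (1 / (z + c) - mu)" by (simp add: field_simps)
      show ?thesis
      proof (cases "z \<le> t")
        case True
        then have "h z \<le> ct" unfolding ct_def by (rule hm)
        moreover have "z + c \<le> 1 / mu" using True by (simp add: t_def)
        then have "mu \<le> 1 / (z + c)" using zc mup by (simp add: field_simps)
        ultimately show ?thesis unfolding e using wp
          by (intro mult_nonpos_nonneg) auto
      next
        case False
        then have "ct \<le> h z" unfolding ct_def by (intro hm) auto
        moreover have "1 / mu < z + c" using False by (simp add: t_def)
        then have "1 / (z + c) < mu" using zc mup by (simp add: field_simps)
        ultimately show ?thesis unfolding e using wp
          by (intro mult_nonneg_nonpos) auto
      qed
    qed
    have eqf: "(\<lambda>z. (h z - ct) * (w z / (z + c) - mu * w z))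
        = (\<lambda>z. (h z * w z / (z + c) - mu * (h z * w z)) - (ct * (w z / (z + c)) - (ct * mu) * w z))"
      by (rule ext) (simp add: algebra_simps diff_divide_distrib)
    have "(\<integral>z. (h z - ct) * (w z / (z + c) - mu * w z) \<partial>lborel) = (Ihq - mu * Ih) - (ct * Iq - (ct * mu) * Iw)"
      unfolding eqf Ihq_def Ih_def Iq_def Iw_def
      by (intro has_bochner_integral_integral_eq has_bochner_integral_diff has_bochner_integral_mult_right
          has_bochner_integral_integrable iw iq ih ihq)
    moreover have "(\<integral>z. (h z - ct) * (w z / (z + c) - mu * w z) \<partial>lborel) \<le> 0"
    proof -
      have "0 \<le> (\<integral>z. - ((h z - ct) * (w z / (z + c) - mu * w z)) \<partial>lborel)"
      proof (rule integral_nonneg_AE, rule AE_I2)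
        fix z show "0 \<le> - ((h z - ct) * (w z / (z + c) - mu * w z))" using pw[of z] by linarith
      qed
      then show ?thesis by (simp only: Bochner_Integration.integral_minus)
    qed
    ultimately have "Ihq \<le> mu * Ih" using Iwp by (simp add: mu_def)
    then have "Ihq * Iw \<le> Iq * Ih" using Iwp by (simp add: mu_def field_simps)
    then show ?thesis unfolding Ihq_def Iw_def Iq_def Ih_def .
  qed
qed

lemma ratio_alg:
  fixes W1 A1 P Q P2 Q2 :: real
  assumes "W1 \<ge> 0" "A1 \<ge> 0" "P \<ge> 0" "Q \<ge> 0" "0 \<le> P2" "P2 \<le> P" "0 \<le> Q2" "Q2 \<le> Q"
    "Q2 * P \<le> Q * P2" "W1 = 0 \<Longrightarrow> A1 = 0" "P = 0 \<Longrightarrow> Q = 0"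
  shows "(A1 + Q2) / (W1 + P2) \<le> max (A1 / W1) ((A1 + Q) / (W1 + P))"
proof -
  have m1: "A1 / W1 \<ge> 0" using assms by simp
  show ?thesis
  proof (cases "P2 = 0")
    case True
    have "Q2 = 0"
    proof (cases "P = 0")
      case True then show ?thesis using assms by simp
    next
      case False
      then have "Q2 * P \<le> 0" using assms \<open>P2 = 0\<close> by simp
      then show ?thesis using assms False by (simp add: mult_le_0_iff)
    qed
    then show ?thesis using True by simp
  next
    case False
    then have P2p: "P2 > 0" and Pp: "P > 0" using assms by auto
    define b where "b = Q / P"
    have Qb: "Q = b * P" using Pp by (simp add: b_def)
    have Q2b: "Q2 \<le> b * P2" using assms(9) Pp by (simp add: b_def field_simps)
    have b0: "b \<ge> 0" using assms Pp by (simp add: b_def)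
    show ?thesis
    proof (cases "W1 = 0")
      case True
      then have "A1 = 0" using assms by simp
      have "Q2 / P2 \<le> b" using Q2b P2p by (simp add: divide_le_eq mult.commute)
      then show ?thesis using True \<open>A1 = 0\<close> Pp by (simp add: b_def)
    next
      case False
      then have W1p: "W1 > 0" using assms by simp
      define av where "av = A1 / W1"
      have Aa: "A1 = av * W1" using W1p by (simp add: av_def)
      show ?thesis
      proof (cases "b \<le> av")
        case True
        have "A1 + Q2 \<le> av * (W1 + P2)" using Aa Q2b True P2p
          by (smt (verit) mult_right_mono distrib_left mult.commute)
        then have "(A1 + Q2) / (W1 + P2) \<le> av" using W1p P2p by (simp add: divide_le_eq)
        then show ?thesis by (simp add: av_def)
      next
        case False
        have "(A1 + Q2) * (W1 + P) \<le> (A1 + b * P2) * (W1 + P)"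
          using Q2b W1p Pp by (intro mult_right_mono) auto
        also have "\<dots> \<le> (A1 + b * P) * (W1 + P2)"
        proof -
          have "0 \<le> (P - P2) * (b * W1 - A1)" using assms(6) False Aa W1p
            by (intro mult_nonneg_nonneg) (auto simp: mult_right_mono)
          then show ?thesis by (simp add: algebra_simps)
        qed
        finally have "(A1 + Q2) / (W1 + P2) \<le> (A1 + Q) / (W1 + P)"
          using W1p P2p Pp Qb by (simp add: divide_le_eq le_divide_eq mult.commute)
        then show ?thesis by simp
      qed
    qed
  qed
qed

lemma kint:
  assumes "a > 1"
  shows "integrable lborel (\<lambda>z. rank_kernel D a lam B i th z * pdf_D D a (z + c))"
    "integrable lborel (\<lambda>z. rank_kernel D a lam B i th z * pdf_D D a (z + c) / (z + c))"
  using kernel_bounds[OF assms, of D lam B i th]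
  by (intro integrable_X[OF assms, where C = "real (card {S. S \<subseteq> B - {i} \<and> card S = th - 1})"]; force)+

lemma kint_F:
  assumes "a > 1"
  shows "integrable lborel (\<lambda>z. cdf_D D a (z + lam j) * (rank_kernel D a lam B i th z * pdf_D D a (z + c)))"
    "integrable lborel (\<lambda>z. cdf_D D a (z + lam j) * (rank_kernel D a lam B i th z * pdf_D D a (z + c)) / (z + c))"
proof -
  let ?C = "real (card {S. S \<subseteq> B - {i} \<and> card S = th - 1})"
  have b: "\<bar>cdf_D D a (z + lam j) * rank_kernel D a lam B i th z\<bar> \<le> ?C" for z
  proof -
    have "cdf_D D a (z + lam j) * rank_kernel D a lam B i th z \<le> 1 * ?C"
      using kernel_bounds[OF assms, of D lam B i th z] cdf_bounds[OF assms, of D "z + lam j"]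
      by (intro mult_mono) auto
    moreover have "0 \<le> cdf_D D a (z + lam j) * rank_kernel D a lam B i th z"
      using kernel_bounds[OF assms, of D lam B i th z] cdf_bounds[OF assms, of D "z + lam j"] by simp
    ultimately show ?thesis by simp
  qed
  have "integrable lborel (\<lambda>z. (cdf_D D a (z + lam j) * rank_kernel D a lam B i th z) * pdf_D D a (z + c))"
    "integrable lborel (\<lambda>z. (cdf_D D a (z + lam j) * rank_kernel D a lam B i th z) * pdf_D D a (z + c) / (z + c))"
    using b by (intro integrable_X[OF assms, where C = ?C]; simp)+
  then show "integrable lborel (\<lambda>z. cdf_D D a (z + lam j) * (rank_kernel D a lam B i th z * pdf_D D a (z + c)))"
    "integrable lborel (\<lambda>z. cdf_D D a (z + lam j) * (rank_kernel D a lam B i th z * pdf_D D a (z + c)) / (z + c))"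
    by (simp_all add: mult.assoc)
qed

lemma phi_i_full:
  assumes "a > 1"
  shows "phi_i D a lam m B i = (\<integral>z. (\<Sum>th=1..m. rank_kernel D a lam B i th z * pdf_D D a (z + lam i)) \<partial>lborel)"
  unfolding phi_i_def phi_it_full
  by (rule Bochner_Integration.integral_sum[symmetric]) (rule kint(1)[OF assms])

lemma J_i_full:
  assumes "a > 1"
  shows "J_i D a lam m B i = (\<integral>z. (\<Sum>th=1..m. rank_kernel D a lam B i th z * pdf_D D a (z + lam i) / (z + lam i)) \<partial>lborel)"
  unfolding J_i_def J_it_full
  by (rule Bochner_Integration.integral_sum[symmetric]) (rule kint(2)[OF assms])

lemma pdf_div_nonneg: assumes "a > 1" shows "0 \<le> pdf_D D a x / x"
  using pdf_pos_support(1)[of D a x] pdf_nonneg[OF assms, of D x]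
  by (cases "pdf_D D a x = 0") auto

lemma zero_transfer:
  fixes f g :: "real \<Rightarrow> real"
  assumes "integrable lborel f" "\<And>z. f z \<ge> 0" "(\<integral>z. f z \<partial>lborel) = 0"
    "\<And>z. f z = 0 \<Longrightarrow> g z = 0"
  shows "(\<integral>z. g z \<partial>lborel) = 0"
proof -
  have "AE z in lborel. f z = 0"
    using integral_nonneg_eq_0_iff_AE[OF assms(1)] assms(2,3) by auto
  then have "AE z in lborel. g z = 0" using assms(4) by auto
  then show ?thesis by (rule integral_eq_zero_AE)
qed

theorem lemma13:
  fixes D :: distr and a :: real and d :: nat and B :: "nat set"
    and i j m :: nat and lam :: "nat \<Rightarrow> real"
  assumes "a > 1"
    and "B \<subseteq> {1..d}" and "i \<in> B" and "j \<in> B" and "j \<noteq> i"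
    and "\<forall>k\<in>{1..d}. lam k \<ge> 0"
    and "m \<ge> 2"
  shows "(m < card B \<longrightarrow>
           J_i D a lam m B i / phi_i D a lam m B i
             \<le> max (J_i D a lam (m - 1) (B - {j}) i / phi_i D a lam (m - 1) (B - {j}) i)
                    (J_i D a lam m (B - {j}) i / phi_i D a lam m (B - {j}) i))
       \<and> (m = card B \<longrightarrow>
           J_i D a lam m B i / phi_i D a lam m B i
             \<le> J_i D a lam (m - 1) (B - {j}) i / phi_i D a lam (m - 1) (B - {j}) i)"
proof -
  note a1 = assms(1)
  have finB: "finite B" using assms(2) finite_subset by blast
  define B' where "B' = B - {j}"
  define S1 where "S1 z = (\<Sum>th=1..m-1. rank_kernel D a lam B' i th z * pdf_D D a (z + lam i))" for z
  define T1 where "T1 z = (\<Sum>th=1..m-1. rank_kernel D a lam B' i th z * pdf_D D a (z + lam i) / (z + lam i))" for z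
  define w where "w z = rank_kernel D a lam B' i m z * pdf_D D a (z + lam i)" for z
  define h where "h z = cdf_D D a (z + lam j)" for z
  define W1 where "W1 = (\<integral>z. S1 z \<partial>lborel)"
  define A1 where "A1 = (\<integral>z. T1 z \<partial>lborel)"
  define P where "P = (\<integral>z. w z \<partial>lborel)"
  define Q where "Q = (\<integral>z. w z / (z + lam i) \<partial>lborel)"
  define P2 where "P2 = (\<integral>z. h z * w z \<partial>lborel)"
  define Q2 where "Q2 = (\<integral>z. h z * w z / (z + lam i) \<partial>lborel)"
  have iS1: "integrable lborel S1" unfolding S1_def[abs_def]
    by (intro Bochner_Integration.integrable_sum kint(1)[OF a1])
  have iT1: "integrable lborel T1" unfolding T1_def[abs_def]
    by (intro Bochner_Integration.integrable_sum kint(2)[OF a1])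
  have iw: "integrable lborel w" unfolding w_def[abs_def] by (rule kint(1)[OF a1])
  have iq: "integrable lborel (\<lambda>z. w z / (z + lam i))" unfolding w_def[abs_def] by (rule kint(2)[OF a1])
  have ih: "integrable lborel (\<lambda>z. h z * w z)" unfolding w_def[abs_def] h_def[abs_def] by (rule kint_F(1)[OF a1])
  have ihq: "integrable lborel (\<lambda>z. h z * w z / (z + lam i))" unfolding w_def[abs_def] h_def[abs_def] by (rule kint_F(2)[OF a1])
  have w0: "w z \<ge> 0" for z unfolding w_def
    using kernel_bounds(1)[OF a1] pdf_nonneg[OF a1] by (simp add: mult_nonneg_nonneg)
  have h0: "h z \<ge> 0" "h z \<le> 1" for z unfolding h_def using cdf_bounds[OF a1] by auto
  have q0: "w z / (z + lam i) \<ge> 0" for z unfolding w_def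
    using kernel_bounds(1)[OF a1] pdf_div_nonneg[OF a1, of D "z + lam i"]
    by (simp add: mult_nonneg_nonneg times_divide_eq_right[symmetric] del: times_divide_eq_right)
  have S10: "S1 z \<ge> 0" for z unfolding S1_def
    using kernel_bounds(1)[OF a1] pdf_nonneg[OF a1] by (intro sum_nonneg mult_nonneg_nonneg) auto
  have T1S1: "T1 z = S1 z / (z + lam i)" for z unfolding T1_def S1_def by (simp add: sum_divide_distrib)
  have T10: "T1 z \<ge> 0" for z unfolding T1S1
    using S10[of z] pdf_pos_support(1)[of D a "z + lam i"] unfolding S1_def
    by (cases "pdf_D D a (z + lam i) = 0") auto
  have W10: "W1 \<ge> 0" unfolding W1_def using S10 by (intro integral_nonneg_AE) auto
  have A10: "A1 \<ge> 0" unfolding A1_def using T10 by (intro integral_nonneg_AE) auto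
  have P0: "P \<ge> 0" unfolding P_def using w0 by (intro integral_nonneg_AE) auto
  have Q0: "Q \<ge> 0" unfolding Q_def using q0 by (intro integral_nonneg_AE) auto
  have P20: "P2 \<ge> 0" unfolding P2_def using w0 h0 by (intro integral_nonneg_AE) auto
  have Q20: "Q2 \<ge> 0" unfolding Q2_def using q0 h0
    by (intro integral_nonneg_AE AE_I2) (simp add: mult_nonneg_nonneg times_divide_eq_right[symmetric] del: times_divide_eq_right)
  have P2P: "P2 \<le> P" unfolding P2_def P_def
  proof (intro integral_mono[OF ih iw])
    fix z show "h z * w z \<le> w z" using mult_right_mono[OF h0(2)[of z] w0[of z]] by simp
  qed
  have Q2Q: "Q2 \<le> Q" unfolding Q2_def Q_def
  proof (intro integral_mono[OF ihq iq])
    fix z show "h z * w z / (z + lam i) \<le> w z / (z + lam i)"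
      using mult_right_mono[OF h0(2)[of z] q0[of z]] by simp
  qed
  have cheb': "Q2 * P \<le> Q * P2" unfolding Q2_def P_def Q_def P2_def
  proof (rule cheb[OF iw iq ih ihq w0 h0])
    show "h x \<le> h y" if "x \<le> y" for x y unfolding h_def using that by (intro cdf_mono[OF a1]) auto
    show "z + lam i > 0" if "w z \<noteq> 0" for z
      using that pdf_pos_support(1)[of D a "z + lam i"] unfolding w_def by fastforce
  qed
  have W1A1: "A1 = 0" if "W1 = 0"
    unfolding A1_def by (rule zero_transfer[OF iS1 S10 that[unfolded W1_def]]) (simp add: T1S1)
  have PQ: "Q = 0" if "P = 0"
    unfolding Q_def by (rule zero_transfer[OF iw w0 that[unfolded P_def]]) simp
  have m1: "m \<ge> 1" using assms by simp
  have ij: "i \<in> B" "j \<in> B" "j \<noteq> i" using assms by auto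
  have e1: "phi_i D a lam m B i = W1 + P2"
  proof -
    have "(\<Sum>th=1..m. rank_kernel D a lam B i th z * pdf_D D a (z + lam i)) = S1 z + h z * w z" for z
      unfolding S1_def w_def h_def B'_def sum_distrib_right[symmetric] kernel_sum[OF finB ij m1]
      by (simp add: algebra_simps)
    then show ?thesis unfolding phi_i_full[OF a1] W1_def P2_def
      using Bochner_Integration.integral_add[OF iS1 ih] by simp
  qed
  have e2: "J_i D a lam m B i = A1 + Q2"
  proof -
    have "(\<Sum>th=1..m. rank_kernel D a lam B i th z * pdf_D D a (z + lam i) / (z + lam i)) = T1 z + h z * w z / (z + lam i)" for z
      unfolding T1S1 S1_def w_def h_def B'_def sum_divide_distrib[symmetric] sum_distrib_right[symmetric] kernel_sum[OF finB ij m1]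
      by (simp add: algebra_simps add_divide_distrib)
    then show ?thesis unfolding J_i_full[OF a1] A1_def Q2_def
      using Bochner_Integration.integral_add[OF iT1 ihq] by simp
  qed
  have e3: "phi_i D a lam (m - 1) B' i = W1" unfolding phi_i_full[OF a1] W1_def S1_def ..
  have e4: "J_i D a lam (m - 1) B' i = A1" unfolding J_i_full[OF a1] A1_def T1_def ..
  obtain n where mn: "m = Suc n" using m1 by (cases m) auto
  have e5: "phi_i D a lam m B' i = W1 + P"
  proof -
    have "(\<Sum>th=1..m. rank_kernel D a lam B' i th z * pdf_D D a (z + lam i)) = S1 z + w z" for z
      unfolding S1_def w_def mn by simp
    then show ?thesis unfolding phi_i_full[OF a1] W1_def P_def
      using Bochner_Integration.integral_add[OF iS1 iw] by simp
  qed
  have e6: "J_i D a lam m B' i = A1 + Q"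
  proof -
    have "(\<Sum>th=1..m. rank_kernel D a lam B' i th z * pdf_D D a (z + lam i) / (z + lam i)) = T1 z + w z / (z + lam i)" for z
      unfolding T1_def w_def mn by simp
    then show ?thesis unfolding J_i_full[OF a1] A1_def Q_def
      using Bochner_Integration.integral_add[OF iT1 iq] by simp
  qed
  have part1: "(A1 + Q2) / (W1 + P2) \<le> max (A1 / W1) ((A1 + Q) / (W1 + P))"
    by (rule ratio_alg[OF W10 A10 P0 Q0 P20 P2P Q20 Q2Q cheb' W1A1 PQ])
  have part2: "(A1 + Q2) / (W1 + P2) \<le> A1 / W1" if "m = card B"
  proof -
    have "card (B' - {i}) = m - 2" using that ij finB by (simp add: B'_def card_Diff_subset)
    then have "{S. S \<subseteq> B' - {i} \<and> card S = m - 1} = {}" using assms(7)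
      by (auto dest: card_mono[rotated] simp: finB B'_def)
    then have "w z = 0" for z unfolding w_def rank_kernel_def by (simp only: sum.empty mult_zero_left)
    then have "P2 = 0" "Q2 = 0" unfolding P2_def Q2_def by simp_all
    then show ?thesis by simp
  qed
  show ?thesis
    using part1 part2 unfolding e1 e2 e3[unfolded B'_def] e4[unfolded B'_def] e5[unfolded B'_def] e6[unfolded B'_def]
    by simp
qed

end
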